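(* Let $r\ge 0$, let $l_1,\ldots,l_r,\theta_1,\ldots,\theta_r,L$ be real numbers, $u_j=l_j+i\theta_j$, and for $z=x+iy$ ($x,y$ real) let $$A(z)=\begin{pmatrix}\cos y & -e^{x}\sin y\\ -e^{-x}\sin y & -\cos y\end{pmatrix},\qquad \Gamma_L=\begin{pmatrix}e^{L/2}&0\\0&e^{-L/2}\end{pmatrix}.$$ Then $$\operatorname{Tr}\big(A(u_1)A(u_2)\cdots A(u_r)\Gamma_L\big)=\sum_{I\subseteq\{1,\ldots,r\},\ |I|\text{ even}}(-1)^{s(I)}\sin(\theta_I)\cos(\theta_{\hat I})\big(e^{L/2-L_I}+(-1)^r e^{L_I-L/2}\big).$$ Equivalently, the right-hand side equals $\sum_{|I|\text{ even}}(-1)^{s(I)}2\sin(\theta_I)\cos(\theta_{\hat I})\cosh(L/2-L_I)$ when $r$ is even and $\sum_{|I|\text{ even}}(-1)^{s(I)}2\sin(\theta_I)\cos(\theta_{\hat I})\sinh(L/2-L_I)$ when $r$ is odd. (For $r=0$ the product of the $A$'s is the identity.)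
   Context: For a subset $I=\{i_1<\cdots<i_k\}\subseteq\{1,\ldots,r\}$ with $k$ even: $L_I=\sum_{j=1}^k(-1)^j l_{i_j}=-l_{i_1}+l_{i_2}-\cdots+l_{i_k}$; $s(I)=\sum_{m=1}^{k/2}(i_{2m}-i_{2m-1}+1)$; $\sin(\theta_I)=\prod_{i\in I}\sin\theta_i$; $\cos(\theta_{\hat I})=\prod_{i\in\{1,\ldots,r\}\setminus I}\cos\theta_i$. Empty products equal $1$, and for $I=\emptyset$, $L_I=0$ and $s(I)=0$. *)

theory Defs
  imports "HOL-Analysis.Analysis"
begin

definition Amat :: "complex \<Rightarrow> real^2^2" where
  "Amat z = (let x = Re z; y = Im z in
     vector [vector [cos y, - exp x * sin y],
             vector [- exp (- x) * sin y, - cos y]])"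

definition Gamma_mat :: "real \<Rightarrow> real^2^2" where
  "Gamma_mat L = vector [vector [exp (L/2), 0], vector [0, exp (- L/2)]]"

definition mat_prod_upto :: "(nat \<Rightarrow> real^2^2) \<Rightarrow> nat \<Rightarrow> real^2^2" where
  "mat_prod_upto M r = foldr (\<lambda>j P. M j ** P) [1..<r+1] (mat 1)"

definition L_alt :: "(nat \<Rightarrow> real) \<Rightarrow> nat set \<Rightarrow> real" where
  "L_alt l I = (let xs = sorted_list_of_set I in
     (\<Sum>j<length xs. (-1) ^ (j+1) * l (xs ! j)))"

definition s_of :: "nat set \<Rightarrow> nat" where
  "s_of I = (let xs = sorted_list_of_set I in
     (\<Sum>m<length xs div 2. xs ! (2*m+1) - xs ! (2*m) + 1))"

end

theory Submission
  imports Defs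
begin

lemma sl_insert:
  assumes "I \<subseteq> {1..r}"
  shows "sorted_list_of_set (insert (Suc r) I) = sorted_list_of_set I @ [Suc r]"
proof -
  have fin: "finite I" using assms finite_subset by blast
  have lt: "\<forall>x\<in>I. x < Suc r" using assms by auto
  have nI: "Suc r \<notin> I" using assms by auto
  have "sorted_wrt (<) (sorted_list_of_set I @ [Suc r])"
    unfolding sorted_wrt_append using lt fin by simp
  moreover have "set (sorted_list_of_set I @ [Suc r]) = insert (Suc r) I" using fin by simp
  moreover have "length (sorted_list_of_set I @ [Suc r]) = card (insert (Suc r) I)"
    using fin nI by simp
  ultimately show ?thesis
    using sorted_list_of_set.sorted_key_list_of_set_unique[of "insert (Suc r) I"] fin by blast
qed
lemma L_alt_insert:
  assumes "I \<subseteq> {1..r}"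
  shows "L_alt l (insert (Suc r) I) = L_alt l I + (-1)^(card I + 1) * l (Suc r)"
proof -
  have fin: "finite I" using assms finite_subset by blast
  show ?thesis
    unfolding L_alt_def Let_def sl_insert[OF assms]
    using fin by (simp add: nth_append)
qed

lemma last_sl:
  assumes "finite I" "I \<noteq> {}"
  shows "sorted_list_of_set I ! (card I - 1) = Max I"
proof -
  define xs where "xs = sorted_list_of_set I"
  have ne: "xs \<noteq> []" using assms xs_def by simp
  have s: "sorted xs" using xs_def by simp
  have l: "xs ! (card I - 1) = last xs" using ne xs_def assms by (simp add: last_conv_nth)
  have "last xs \<in> I" using ne xs_def assms by (metis last_in_set set_sorted_list_of_set)
  moreover have "\<forall>y\<in>I. y \<le> last xs"
  proof
    fix y assume "y \<in> I"
    then have "y \<in> set xs" using xs_def assms by simp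
    then obtain i where "i < length xs" "xs ! i = y" by (metis in_set_conv_nth)
    then show "y \<le> last xs" using s ne l
      by (metis diff_less last_conv_nth le_eq_less_or_eq length_greater_0_conv less_Suc_eq_le less_one sorted_nth_mono Suc_pred)
  qed
  ultimately show ?thesis using l xs_def assms by (metis Max_eqI)
qed

lemma s_of_insert:
  assumes "I \<subseteq> {1..r}"
  shows "s_of (insert (Suc r) I) = s_of I + (if odd (card I) then Suc r - Max I + 1 else 0)"
proof -
  have fin: "finite I" using assms finite_subset by blast
  define xs where "xs = sorted_list_of_set I"
  have len: "length xs = card I" using xs_def by simp
  show ?thesis
  proof (cases "odd (card I)")
    case True
    then have ne: "I \<noteq> {}" by auto
    have lastx: "xs ! (card I - 1) = Max I" using last_sl[OF fin ne] xs_def by simp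
    have d: "Suc (card I) div 2 = Suc (card I div 2)" using True by presburger
    have e: "2 * (card I div 2) = card I - 1" "2 * (card I div 2) + 1 = card I" using True by presburger+
    have sI: "s_of I = (\<Sum>m<card I div 2. xs ! (2*m+1) - xs ! (2*m) + 1)"
      unfolding s_of_def Let_def xs_def[symmetric] using len by simp
    have A: "(\<Sum>m<card I div 2. (xs @ [Suc r]) ! (2*m+1) - (xs @ [Suc r]) ! (2*m) + 1) = (\<Sum>m<card I div 2. xs ! (2*m+1) - xs ! (2*m) + 1)"
      apply (rule sum.cong) using len True by (auto simp: nth_append)
    have B: "(xs @ [Suc r]) ! (2*(card I div 2)+1) - (xs @ [Suc r]) ! (2*(card I div 2)) + 1 = Suc r - Max I + 1"
      using len e lastx True odd_pos[OF True] by (simp add: nth_append)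
    have "s_of (insert (Suc r) I) = (\<Sum>m<Suc (card I div 2). (xs @ [Suc r]) ! (2*m+1) - (xs @ [Suc r]) ! (2*m) + 1)"
      unfolding s_of_def Let_def sl_insert[OF assms] xs_def[symmetric] using len d by simp
    also have "\<dots> = s_of I + (Suc r - Max I + 1)"
      unfolding sum.lessThan_Suc A B sI ..
    finally have c: "s_of (insert (Suc r) I) = s_of I + (Suc r - Max I + 1)" .
    show ?thesis by (simp only: if_P[OF True] c)
  next
    case False
    have d: "Suc (card I) div 2 = card I div 2" using False by presburger
    have "s_of (insert (Suc r) I) = (\<Sum>m<card I div 2. (xs @ [Suc r]) ! (2*m+1) - (xs @ [Suc r]) ! (2*m) + 1)"
      unfolding s_of_def Let_def sl_insert[OF assms] xs_def[symmetric] using len d by simp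
    also have "\<dots> = (\<Sum>m<card I div 2. xs ! (2*m+1) - xs ! (2*m) + 1)"
      apply (rule sum.cong) using len False by (auto simp: nth_append)
    also have "\<dots> = s_of I"
      unfolding s_of_def Let_def xs_def[symmetric] using len by simp
    finally have c: "s_of (insert (Suc r) I) = s_of I" .
    show ?thesis by (simp only: if_not_P[OF False] c add_0_right)
  qed
qed






lemma mat_prod_upto_Suc:
  "mat_prod_upto M (Suc r) = mat_prod_upto M r ** M (Suc r)"
proof -
  have gen: "foldr (\<lambda>j P. M j ** P) xs B = foldr (\<lambda>j P. M j ** P) xs (mat 1) ** B" for xs B
    by (induction xs) (simp_all add: matrix_mul_assoc matrix_mul_lid)
  have "[1..<Suc r + 1] = [1..<r+1] @ [Suc r]" by simp
  then show ?thesis unfolding mat_prod_upto_def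
    by (simp only: foldr_append) (simp add: gen[of _ "M (Suc r)"] matrix_mul_rid)
qed




lemma split_sum:
  fixes f :: "nat set \<Rightarrow> real"
  shows "(\<Sum>I\<in>{I. I \<subseteq> {1..Suc r} \<and> P (card I)}. f I)
    = (\<Sum>I\<in>{I. I \<subseteq> {1..r} \<and> P (card I)}. f I)
      + (\<Sum>I\<in>{I. I \<subseteq> {1..r} \<and> P (Suc (card I))}. f (insert (Suc r) I))"
proof -
  let ?A = "{I. I \<subseteq> {1..r} \<and> P (card I)}"
  let ?B = "{I. I \<subseteq> {1..r} \<and> P (Suc (card I))}"
  have U: "{1..Suc r} = insert (Suc r) {1..r}" by (simp add: atLeastAtMostSuc_conv)
  have nr: "Suc r \<notin> {1..r}" by simp
  have finA: "finite ?A" by (rule finite_subset[of _ "Pow {1..r}"]) auto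
  have finB: "finite ?B" by (rule finite_subset[of _ "Pow {1..r}"]) auto
  have inj: "inj_on (insert (Suc r)) ?B"
  proof (rule inj_onI)
    fix X Y assume X: "X \<in> ?B" and Y: "Y \<in> ?B" and e: "insert (Suc r) X = insert (Suc r) Y"
    have "Suc r \<notin> X" "Suc r \<notin> Y" using X Y nr by blast+
    then have "X = insert (Suc r) X - {Suc r}" "Y = insert (Suc r) Y - {Suc r}" by simp_all
    then show "X = Y" using e by simp
  qed
  have eq: "{I. I \<subseteq> {1..Suc r} \<and> P (card I)} = ?A \<union> insert (Suc r) ` ?B"
  proof (rule set_eqI)
    fix I
    show "I \<in> {I. I \<subseteq> {1..Suc r} \<and> P (card I)} \<longleftrightarrow> I \<in> ?A \<union> insert (Suc r) ` ?B"
    proof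
      assume a: "I \<in> {I. I \<subseteq> {1..Suc r} \<and> P (card I)}"
      then have aI: "I \<subseteq> insert (Suc r) {1..r}" and aP: "P (card I)" using U by simp_all
      show "I \<in> ?A \<union> insert (Suc r) ` ?B"
      proof (cases "Suc r \<in> I")
        case True
        define J where "J = I - {Suc r}"
        have J: "J \<subseteq> {1..r}" using aI J_def by blast
        have fJ: "finite J" using J finite_subset by blast
        have IJ: "I = insert (Suc r) J" using True J_def by blast
        have "Suc r \<notin> J" using J_def by blast
        then have "card I = Suc (card J)" using fJ IJ by simp
        hence "J \<in> ?B" using aP J by simp
        then show ?thesis using IJ by blast
      next
        case False
        then have "I \<subseteq> {1..r}" using aI by blast
        then show ?thesis using aP by simp
      qed
    next
      assume "I \<in> ?A \<union> insert (Suc r) ` ?B"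
      then show "I \<in> {I. I \<subseteq> {1..Suc r} \<and> P (card I)}"
      proof
        assume "I \<in> ?A" then show ?thesis using U by blast
      next
        assume "I \<in> insert (Suc r) ` ?B"
        then obtain J where J: "J \<in> ?B" and IJ: "I = insert (Suc r) J" by blast
        have Jsub: "J \<subseteq> {1..r}" and JP: "P (Suc (card J))" using J by simp_all
        have fJ: "finite J" using Jsub finite_subset by blast
        have "Suc r \<notin> J" using Jsub nr by blast
        then have "card I = Suc (card J)" using fJ IJ by simp
        moreover have "I \<subseteq> {1..Suc r}" using IJ Jsub U by blast
        ultimately show ?thesis using JP by simp
      qed
    qed
  qed
  have disj: "?A \<inter> insert (Suc r) ` ?B = {}" using nr by blast
  have "(\<Sum>I\<in>?A \<union> insert (Suc r) ` ?B. f I) = (\<Sum>I\<in>?A. f I) + (\<Sum>I\<in>insert (Suc r) ` ?B. f I)"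
    by (rule sum.union_disjoint) (use finA finB disj in auto)
  also have "(\<Sum>I\<in>insert (Suc r) ` ?B. f I) = (\<Sum>I\<in>?B. f (insert (Suc r) I))"
    using sum.reindex[OF inj, of f] by simp
  finally show ?thesis unfolding eq .
qed


definition wt :: "(nat \<Rightarrow> real) \<Rightarrow> nat \<Rightarrow> nat set \<Rightarrow> real" where
  "wt \<theta> r I = (\<Prod>i\<in>I. sin (\<theta> i)) * (\<Prod>i\<in>{1..r} - I. cos (\<theta> i))"

definition sg :: "nat \<Rightarrow> nat set \<Rightarrow> real" where
  "sg r I = (-1) ^ (s_of I + (if odd (card I) then r - Max I else 0))"

lemma wt_Suc:
  assumes "I \<subseteq> {1..r}"
  shows "wt \<theta> (Suc r) I = wt \<theta> r I * cos (\<theta> (Suc r))"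
proof -
  have "{1..Suc r} - I = insert (Suc r) ({1..r} - I)" using assms by (auto simp: le_Suc_eq)
  then show ?thesis unfolding wt_def by simp
qed

lemma wt_Suc_ins:
  assumes "I \<subseteq> {1..r}"
  shows "wt \<theta> (Suc r) (insert (Suc r) I) = wt \<theta> r I * sin (\<theta> (Suc r))"
proof -
  have fin: "finite I" using assms finite_subset by blast
  have nI: "Suc r \<notin> I" using assms by auto
  have "{1..Suc r} - insert (Suc r) I = {1..r} - I" using assms by (auto simp: le_Suc_eq)
  then show ?thesis unfolding wt_def using fin nI by simp
qed

lemma sg_Suc:
  assumes "I \<subseteq> {1..r}"
  shows "sg (Suc r) I = (if odd (card I) then - sg r I else sg r I)"
proof (cases "odd (card I)")
  case True
  then have ne: "I \<noteq> {}" by auto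
  have fin: "finite I" using assms finite_subset by blast
  have "Max I \<le> r" using assms ne fin by (meson Max_in atLeastAtMost_iff subsetD)
  then have "Suc r - Max I = Suc (r - Max I)" by simp
  then show ?thesis unfolding sg_def using True by simp
next
  case False
  then show ?thesis unfolding sg_def by simp
qed

lemma sg_Suc_ins:
  assumes "I \<subseteq> {1..r}"
  shows "sg (Suc r) (insert (Suc r) I) = sg r I"
proof -
  have fin: "finite I" using assms finite_subset by blast
  have nI: "Suc r \<notin> I" using assms by auto
  have c: "card (insert (Suc r) I) = Suc (card I)" using fin nI by simp
  have s: "s_of (insert (Suc r) I) = s_of I + (if odd (card I) then Suc r - Max I + 1 else 0)"
    by (rule s_of_insert[OF assms])
  show ?thesis
  proof (cases "odd (card I)")
    case True
    then have ne: "I \<noteq> {}" by auto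
    have "Max I \<le> r" using assms ne fin by (meson Max_in atLeastAtMost_iff subsetD)
    then have "Suc r - Max I + 1 = (r - Max I) + 2" by simp
    then show ?thesis unfolding sg_def c s using True by (simp add: power_add)
  next
    case False
    have "Max (insert (Suc r) I) = Suc r"
      using fin assms by (auto intro!: Max_eqI)
    then show ?thesis unfolding sg_def c s using False by simp
  qed
qed

lemma sum_mult_cong:
  fixes f g :: "'a \<Rightarrow> real"
  assumes "\<And>I. I \<in> A \<Longrightarrow> f I = g I * k"
  shows "sum f A = sum g A * k"
  using assms by (simp add: sum_distrib_right)






lemma Amat_entries:
  "Amat (Complex x y) $ 1 $ 1 = cos y" "Amat (Complex x y) $ 1 $ 2 = - exp x * sin y"
  "Amat (Complex x y) $ 2 $ 1 = - exp (-x) * sin y" "Amat (Complex x y) $ 2 $ 2 = - cos y"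
  by (simp_all add: Amat_def)

lemma mm2: "((A::real^2^2) ** B) $ i $ j = A $ i $ 1 * B $ 1 $ j + A $ i $ 2 * B $ 2 $ j"
  by (simp add: matrix_matrix_mult_def sum_2)

lemma entries:
  fixes l \<theta> :: "nat \<Rightarrow> real"
  shows "mat_prod_upto (\<lambda>j. Amat (Complex (l j) (\<theta> j))) r $ 1 $ 1
      = (\<Sum>I\<in>{I. I \<subseteq> {1..r} \<and> even (card I)}. sg r I * wt \<theta> r I * exp (- L_alt l I))
    \<and> mat_prod_upto (\<lambda>j. Amat (Complex (l j) (\<theta> j))) r $ 1 $ 2
      = (\<Sum>I\<in>{I. I \<subseteq> {1..r} \<and> odd (card I)}. - (sg r I * wt \<theta> r I * exp (- L_alt l I)))
    \<and> mat_prod_upto (\<lambda>j. Amat (Complex (l j) (\<theta> j))) r $ 2 $ 1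
      = (\<Sum>I\<in>{I. I \<subseteq> {1..r} \<and> odd (card I)}. (-1)^r * sg r I * wt \<theta> r I * exp (L_alt l I))
    \<and> mat_prod_upto (\<lambda>j. Amat (Complex (l j) (\<theta> j))) r $ 2 $ 2
      = (\<Sum>I\<in>{I. I \<subseteq> {1..r} \<and> even (card I)}. (-1)^r * sg r I * wt \<theta> r I * exp (L_alt l I))"
proof (induction r)
  case 0
  have e: "{I. I \<subseteq> {1..(0::nat)} \<and> even (card I)} = {{}}" by auto
  have o: "{I. I \<subseteq> {1..(0::nat)} \<and> odd (card I)} = {}" by auto
  have s: "s_of {} = 0" by (simp add: s_of_def)
  have L: "L_alt l {} = 0" by (simp add: L_alt_def)
  show ?case unfolding e o
    by (simp add: mat_prod_upto_def mat_def sg_def wt_def s L)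
next
  case (Suc r)
  define M where "M = (\<lambda>j. Amat (Complex (l j) (\<theta> j)))"
  define Q where "Q = mat_prod_upto M r"
  define c where "c = cos (\<theta> (Suc r))"
  define a where "a = sin (\<theta> (Suc r))"
  define x where "x = l (Suc r)"
  have P: "mat_prod_upto M (Suc r) = Q ** M (Suc r)" unfolding Q_def by (rule mat_prod_upto_Suc)
  have A: "M (Suc r) $ 1 $ 1 = c" "M (Suc r) $ 1 $ 2 = - exp x * a"
     "M (Suc r) $ 2 $ 1 = - exp (-x) * a" "M (Suc r) $ 2 $ 2 = - c"
    unfolding M_def c_def a_def x_def by (simp_all add: Amat_entries)
  have IH: "Q $ 1 $ 1 = (\<Sum>I\<in>{I. I \<subseteq> {1..r} \<and> even (card I)}. sg r I * wt \<theta> r I * exp (- L_alt l I))"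
     "Q $ 1 $ 2 = (\<Sum>I\<in>{I. I \<subseteq> {1..r} \<and> odd (card I)}. - (sg r I * wt \<theta> r I * exp (- L_alt l I)))"
     "Q $ 2 $ 1 = (\<Sum>I\<in>{I. I \<subseteq> {1..r} \<and> odd (card I)}. (-1)^r * sg r I * wt \<theta> r I * exp (L_alt l I))"
     "Q $ 2 $ 2 = (\<Sum>I\<in>{I. I \<subseteq> {1..r} \<and> even (card I)}. (-1)^r * sg r I * wt \<theta> r I * exp (L_alt l I))"
    using Suc.IH unfolding Q_def M_def by blast+
  have ev_odd: "(\<lambda>n. even (Suc n)) = (\<lambda>n. odd n)" "(\<lambda>n. odd (Suc n)) = (\<lambda>n. even n)" by auto
  have split_e: "(\<Sum>I\<in>{I. I \<subseteq> {1..Suc r} \<and> even (card I)}. f I)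
     = (\<Sum>I\<in>{I. I \<subseteq> {1..r} \<and> even (card I)}. f I) + (\<Sum>I\<in>{I. I \<subseteq> {1..r} \<and> odd (card I)}. f (insert (Suc r) I))" for f :: "nat set \<Rightarrow> real"
    using split_sum[where P="\<lambda>n. even n" and r=r and f=f] by simp
  have split_o: "(\<Sum>I\<in>{I. I \<subseteq> {1..Suc r} \<and> odd (card I)}. f I)
     = (\<Sum>I\<in>{I. I \<subseteq> {1..r} \<and> odd (card I)}. f I) + (\<Sum>I\<in>{I. I \<subseteq> {1..r} \<and> even (card I)}. f (insert (Suc r) I))" for f :: "nat set \<Rightarrow> real"
    using split_sum[where P="\<lambda>n. odd n" and r=r and f=f] by simp
  note facts = wt_Suc wt_Suc_ins sg_Suc sg_Suc_ins L_alt_insert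
  have e11: "(\<Sum>I\<in>{I. I \<subseteq> {1..Suc r} \<and> even (card I)}. sg (Suc r) I * wt \<theta> (Suc r) I * exp (- L_alt l I))
     = Q $ 1 $ 1 * c + Q $ 1 $ 2 * (- exp (-x) * a)"
    unfolding split_e IH
    by (intro arg_cong2[where f="(+)"] sum_mult_cong)
       (auto simp: facts c_def a_def x_def exp_add exp_diff exp_minus field_simps)
  have e12: "(\<Sum>I\<in>{I. I \<subseteq> {1..Suc r} \<and> odd (card I)}. - (sg (Suc r) I * wt \<theta> (Suc r) I * exp (- L_alt l I)))
     = Q $ 1 $ 2 * (- c) + Q $ 1 $ 1 * (- exp x * a)"
    unfolding split_o IH
    by (intro arg_cong2[where f="(+)"] sum_mult_cong)
       (auto simp: facts c_def a_def x_def exp_add exp_diff exp_minus field_simps)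
  have e21: "(\<Sum>I\<in>{I. I \<subseteq> {1..Suc r} \<and> odd (card I)}. (-1)^(Suc r) * sg (Suc r) I * wt \<theta> (Suc r) I * exp (L_alt l I))
     = Q $ 2 $ 1 * c + Q $ 2 $ 2 * (- exp (-x) * a)"
    unfolding split_o IH
    by (intro arg_cong2[where f="(+)"] sum_mult_cong)
       (auto simp: facts c_def a_def x_def exp_add exp_diff exp_minus field_simps)
  have e22: "(\<Sum>I\<in>{I. I \<subseteq> {1..Suc r} \<and> even (card I)}. (-1)^(Suc r) * sg (Suc r) I * wt \<theta> (Suc r) I * exp (L_alt l I))
     = Q $ 2 $ 2 * (- c) + Q $ 2 $ 1 * (- exp x * a)"
    unfolding split_e IH
    by (intro arg_cong2[where f="(+)"] sum_mult_cong)
       (auto simp: facts c_def a_def x_def exp_add exp_diff exp_minus field_simps)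
  show ?case unfolding M_def[symmetric] P mm2 A e11 e12 e21 e22
    by (simp add: algebra_simps)
qed




theorem mainTheorem2:
  fixes r :: nat and l \<theta> :: "nat \<Rightarrow> real" and L :: real
  defines "u \<equiv> (\<lambda>j. Complex (l j) (\<theta> j))"
  shows "trace (mat_prod_upto (\<lambda>j. Amat (u j)) r ** Gamma_mat L)
     = (\<Sum>I\<in>{I. I \<subseteq> {1..r} \<and> even (card I)}.
          (-1) ^ s_of I * (\<Prod>i\<in>I. sin (\<theta> i)) * (\<Prod>i\<in>{1..r} - I. cos (\<theta> i))
          * (exp (L/2 - L_alt l I) + (-1) ^ r * exp (L_alt l I - L/2)))
   \<and> (\<Sum>I\<in>{I. I \<subseteq> {1..r} \<and> even (card I)}.
          (-1) ^ s_of I * (\<Prod>i\<in>I. sin (\<theta> i)) * (\<Prod>i\<in>{1..r} - I. cos (\<theta> i))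
          * (exp (L/2 - L_alt l I) + (-1) ^ r * exp (L_alt l I - L/2)))
     = (if even r then
          (\<Sum>I\<in>{I. I \<subseteq> {1..r} \<and> even (card I)}.
             (-1) ^ s_of I * 2 * (\<Prod>i\<in>I. sin (\<theta> i)) * (\<Prod>i\<in>{1..r} - I. cos (\<theta> i))
             * cosh (L/2 - L_alt l I))
        else
          (\<Sum>I\<in>{I. I \<subseteq> {1..r} \<and> even (card I)}.
             (-1) ^ s_of I * 2 * (\<Prod>i\<in>I. sin (\<theta> i)) * (\<Prod>i\<in>{1..r} - I. cos (\<theta> i))
             * sinh (L/2 - L_alt l I)))"
proof -
  let ?E = "{I. I \<subseteq> {1..r} \<and> even (card I)}"
  define P where "P = mat_prod_upto (\<lambda>j. Amat (u j)) r"
  have P': "P = mat_prod_upto (\<lambda>j. Amat (Complex (l j) (\<theta> j))) r" unfolding P_def u_def ..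
  have ent: "P $ 1 $ 1 = (\<Sum>I\<in>?E. sg r I * wt \<theta> r I * exp (- L_alt l I))"
     "P $ 2 $ 2 = (\<Sum>I\<in>?E. (-1)^r * sg r I * wt \<theta> r I * exp (L_alt l I))"
    unfolding P' using entries[where r=r and l=l and \<theta>=\<theta>] by blast+
  have G: "Gamma_mat L $ 1 $ 1 = exp (L/2)" "Gamma_mat L $ 2 $ 1 = 0"
     "Gamma_mat L $ 1 $ 2 = 0" "Gamma_mat L $ 2 $ 2 = exp (- L/2)"
    by (simp_all add: Gamma_mat_def)
  have tr: "trace (P ** Gamma_mat L) = P $ 1 $ 1 * exp (L/2) + P $ 2 $ 2 * exp (- L/2)"
    unfolding trace_def sum_2 mm2 G by simp
  have sgE: "sg r I = (-1) ^ s_of I" if "I \<in> ?E" for I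
    using that unfolding sg_def by simp
  have part1: "trace (P ** Gamma_mat L)
     = (\<Sum>I\<in>?E.
          (-1) ^ s_of I * (\<Prod>i\<in>I. sin (\<theta> i)) * (\<Prod>i\<in>{1..r} - I. cos (\<theta> i))
          * (exp (L/2 - L_alt l I) + (-1) ^ r * exp (L_alt l I - L/2)))"
    unfolding tr ent sum_distrib_right sum.distrib[symmetric]
  proof (rule sum.cong[OF refl])
    fix I assume I: "I \<in> ?E"
    have e1: "exp (L/2 - L_alt l I) = exp (- L_alt l I) * exp (L/2)"
      by (simp add: exp_add[symmetric])
    have e2: "exp (L_alt l I - L/2) = exp (L_alt l I) * exp (- L/2)"
      by (simp add: exp_add[symmetric])
    show "sg r I * wt \<theta> r I * exp (- L_alt l I) * exp (L/2) + (-1)^r * sg r I * wt \<theta> r I * exp (L_alt l I) * exp (- L/2)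
      = (-1) ^ s_of I * (\<Prod>i\<in>I. sin (\<theta> i)) * (\<Prod>i\<in>{1..r} - I. cos (\<theta> i))
          * (exp (L/2 - L_alt l I) + (-1) ^ r * exp (L_alt l I - L/2))"
      unfolding e1 e2 sgE[OF I] wt_def by (simp add: algebra_simps)
  qed
  have part2: "(\<Sum>I\<in>?E.
          (-1) ^ s_of I * (\<Prod>i\<in>I. sin (\<theta> i)) * (\<Prod>i\<in>{1..r} - I. cos (\<theta> i))
          * (exp (L/2 - L_alt l I) + (-1) ^ r * exp (L_alt l I - L/2)))
     = (if even r then
          (\<Sum>I\<in>?E.
             (-1) ^ s_of I * 2 * (\<Prod>i\<in>I. sin (\<theta> i)) * (\<Prod>i\<in>{1..r} - I. cos (\<theta> i))
             * cosh (L/2 - L_alt l I))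
        else
          (\<Sum>I\<in>?E.
             (-1) ^ s_of I * 2 * (\<Prod>i\<in>I. sin (\<theta> i)) * (\<Prod>i\<in>{1..r} - I. cos (\<theta> i))
             * sinh (L/2 - L_alt l I)))"
  proof (cases "even r")
    case True
    have "exp (L/2 - L_alt l I) + (-1) ^ r * exp (L_alt l I - L/2) = 2 * cosh (L/2 - L_alt l I)" for I
      using True by (simp add: cosh_def)
    then show ?thesis using True by (simp add: mult_ac)
  next
    case False
    have "exp (L/2 - L_alt l I) + (-1) ^ r * exp (L_alt l I - L/2) = 2 * sinh (L/2 - L_alt l I)" for I
      using False by (simp add: sinh_def)
    then show ?thesis using False by (simp add: mult_ac)
  qed
  show ?thesis using part1 part2 unfolding P_def by simp
qed


end
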